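(* Let $M=\langle W,\leq,R,V\rangle$ be a brIML1-model, let $\gamma$ be a formula such that $w\nVdash\gamma$ for some $w\in W$, let $\Sigma$ be the set of all subformulas of $\gamma$, and let $M_\Sigma=\langle W_\Sigma,\leq_\Sigma,R_\Sigma,V_\Sigma\rangle$ be the filtered model. Then for every $w\in W$ and every $\alpha\in\Sigma$: $w\Vdash_M\alpha$ iff $[w]\Vdash_{M_\Sigma}\alpha$.
   Context: Formulas are built from a denumerable set $PV$ of propositional variables and $\bot$ using $\land,\lor,\rightarrow$ and unary $\Delta$. A brIML1-model $\langle W,\leq,R,V\rangle$: $W$ non-empty, $\leq$ a partial order, $R$ a binary relation with ($w\leq v\Rightarrow wRv$) and ($w\leq v$, $vRu$ $\Rightarrow wRu$), $V:PV\to P(W)$ upward closed under $\leq$. Forcing: atoms via $V$; $\bot$ never; $\land,\lor$ pointwise; $w\Vdash\varphi\rightarrow\psi$ iff every $v\geq w$ has $v\nVdash\varphi$ or $v\Vdash\psi$; $w\Vdash\Delta\varphi$ iff every $v$ with $wRv$ has $v\Vdash\varphi$. Filtration: $w\sim v$ iff $w,v$ force the same formulas of $\Sigma$; $[w]$ the class of $w$; $W_\Sigma=\{[w]:w\in W\}$; $[w]\leq_\Sigma[v]$ iff every $\alpha\in\Sigma$ forced at $w$ is forced at $v$; $[w]R_\Sigma[v]$ iff for every $\Delta\beta\in\Sigma$, $w\Vdash\Delta\beta$ implies $v\Vdash\beta$; $V_\Sigma(q)=\{[w]:w\in V(q)\}$ if $q\in\Sigma$ and $V_\Sigma(q)=\emptyset$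 if $q\notin\Sigma$. Forcing in $M_\Sigma$ is bi-relational forcing with respect to $\leq_\Sigma,R_\Sigma,V_\Sigma$. *)

theory Defs
  imports Main
begin

datatype fm = Var nat | Bot | And fm fm | Or fm fm | Imp fm fm | Delta fm

primrec subformulas :: "fm \<Rightarrow> fm set" where
  "subformulas (Var p) = {Var p}"
| "subformulas Bot = {Bot}"
| "subformulas (And a b) = insert (And a b) (subformulas a \<union> subformulas b)"
| "subformulas (Or a b) = insert (Or a b) (subformulas a \<union> subformulas b)"
| "subformulas (Imp a b) = insert (Imp a b) (subformulas a \<union> subformulas b)"
| "subformulas (Delta a) = insert (Delta a) (subformulas a)"

definition brIML1_model ::
  "'w set \<Rightarrow> ('w \<Rightarrow> 'w \<Rightarrow> bool) \<Rightarrow> ('w \<Rightarrow> 'w \<Rightarrow> bool) \<Rightarrow> (nat \<Rightarrow> 'w set) \<Rightarrow> bool" where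
  "brIML1_model W le R V \<longleftrightarrow>
     W \<noteq> {} \<and>
     (\<forall>w\<in>W. le w w) \<and>
     (\<forall>w\<in>W. \<forall>v\<in>W. le w v \<and> le v w \<longrightarrow> w = v) \<and>
     (\<forall>w\<in>W. \<forall>v\<in>W. \<forall>u\<in>W. le w v \<and> le v u \<longrightarrow> le w u) \<and>
     (\<forall>w v. le w v \<longrightarrow> w \<in> W \<and> v \<in> W) \<and>
     (\<forall>w v. R w v \<longrightarrow> w \<in> W \<and> v \<in> W) \<and>
     (\<forall>w\<in>W. \<forall>v\<in>W. le w v \<longrightarrow> R w v) \<and>
     (\<forall>w\<in>W. \<forall>v\<in>W. \<forall>u\<in>W. le w v \<and> R v u \<longrightarrow> R w u) \<and>
     (\<forall>q. V q \<subseteq> W) \<and>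
     (\<forall>q. \<forall>w\<in>W. \<forall>v\<in>W. w \<in> V q \<and> le w v \<longrightarrow> v \<in> V q)"

fun forces ::
  "'w set \<Rightarrow> ('w \<Rightarrow> 'w \<Rightarrow> bool) \<Rightarrow> ('w \<Rightarrow> 'w \<Rightarrow> bool) \<Rightarrow> (nat \<Rightarrow> 'w set) \<Rightarrow> 'w \<Rightarrow> fm \<Rightarrow> bool" where
  "forces W le R V w (Var q) \<longleftrightarrow> w \<in> V q"
| "forces W le R V w Bot \<longleftrightarrow> False"
| "forces W le R V w (And a b) \<longleftrightarrow> forces W le R V w a \<and> forces W le R V w b"
| "forces W le R V w (Or a b) \<longleftrightarrow> forces W le R V w a \<or> forces W le R V w b"
| "forces W le R V w (Imp a b) \<longleftrightarrow>
     (\<forall>v\<in>W. le w v \<longrightarrow> \<not> forces W le R V v a \<or> forces W le R V v b)"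
| "forces W le R V w (Delta a) \<longleftrightarrow> (\<forall>v\<in>W. R w v \<longrightarrow> forces W le R V v a)"

text \<open>Filtration through \<Sigma>; classes are represented as sets of worlds.\<close>
definition filt_class :: "'w set \<Rightarrow> ('w \<Rightarrow> 'w \<Rightarrow> bool) \<Rightarrow> ('w \<Rightarrow> 'w \<Rightarrow> bool) \<Rightarrow> (nat \<Rightarrow> 'w set)
    \<Rightarrow> fm set \<Rightarrow> 'w \<Rightarrow> 'w set" where
  "filt_class W le R V \<Sigma> w =
     {v \<in> W. \<forall>\<alpha>\<in>\<Sigma>. forces W le R V w \<alpha> \<longleftrightarrow> forces W le R V v \<alpha>}"

definition filt_W :: "'w set \<Rightarrow> ('w \<Rightarrow> 'w \<Rightarrow> bool) \<Rightarrow> ('w \<Rightarrow> 'w \<Rightarrow> bool) \<Rightarrow> (nat \<Rightarrow> 'w set)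
    \<Rightarrow> fm set \<Rightarrow> 'w set set" where
  "filt_W W le R V \<Sigma> = filt_class W le R V \<Sigma> ` W"

definition filt_le :: "'w set \<Rightarrow> ('w \<Rightarrow> 'w \<Rightarrow> bool) \<Rightarrow> ('w \<Rightarrow> 'w \<Rightarrow> bool) \<Rightarrow> (nat \<Rightarrow> 'w set)
    \<Rightarrow> fm set \<Rightarrow> 'w set \<Rightarrow> 'w set \<Rightarrow> bool" where
  "filt_le W le R V \<Sigma> X Y \<longleftrightarrow>
     X \<in> filt_W W le R V \<Sigma> \<and> Y \<in> filt_W W le R V \<Sigma> \<and>
     (\<exists>w v. X = filt_class W le R V \<Sigma> w \<and> Y = filt_class W le R V \<Sigma> v \<and> w \<in> W \<and> v \<in> W \<and>
        (\<forall>\<alpha>\<in>\<Sigma>. forces W le R V w \<alpha> \<longrightarrow> forces W le R V v \<alpha>))"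

definition filt_R :: "'w set \<Rightarrow> ('w \<Rightarrow> 'w \<Rightarrow> bool) \<Rightarrow> ('w \<Rightarrow> 'w \<Rightarrow> bool) \<Rightarrow> (nat \<Rightarrow> 'w set)
    \<Rightarrow> fm set \<Rightarrow> 'w set \<Rightarrow> 'w set \<Rightarrow> bool" where
  "filt_R W le R V \<Sigma> X Y \<longleftrightarrow>
     X \<in> filt_W W le R V \<Sigma> \<and> Y \<in> filt_W W le R V \<Sigma> \<and>
     (\<exists>w v. X = filt_class W le R V \<Sigma> w \<and> Y = filt_class W le R V \<Sigma> v \<and> w \<in> W \<and> v \<in> W \<and>
        (\<forall>\<beta>. Delta \<beta> \<in> \<Sigma> \<longrightarrow> forces W le R V w (Delta \<beta>) \<longrightarrow> forces W le R V v \<beta>))"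

definition filt_V :: "'w set \<Rightarrow> ('w \<Rightarrow> 'w \<Rightarrow> bool) \<Rightarrow> ('w \<Rightarrow> 'w \<Rightarrow> bool) \<Rightarrow> (nat \<Rightarrow> 'w set)
    \<Rightarrow> fm set \<Rightarrow> nat \<Rightarrow> 'w set set" where
  "filt_V W le R V \<Sigma> q =
     (if Var q \<in> \<Sigma> then filt_class W le R V \<Sigma> ` (V q) else {})"

end

theory Submission
  imports Defs
begin

lemma sub_refl: "a \<in> subformulas a"
  by (cases a) auto

lemma sub_trans: "a \<in> subformulas g \<Longrightarrow> subformulas a \<subseteq> subformulas g"
  by (induction g) auto

lemma persist:
  assumes m: "brIML1_model W le R V"
  shows "le w v \<Longrightarrow> forces W le R V w a \<Longrightarrow> forces W le R V v a"
proof (induction a arbitrary: w v)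
  have leW: "\<And>w v. le w v \<Longrightarrow> w \<in> W \<and> v \<in> W" using m unfolding brIML1_model_def by blast
  have tr: "\<And>w v u. w \<in> W \<Longrightarrow> v \<in> W \<Longrightarrow> u \<in> W \<Longrightarrow> le w v \<Longrightarrow> le v u \<Longrightarrow> le w u"
    using m unfolding brIML1_model_def by blast
  have trR: "\<And>w v u. w \<in> W \<Longrightarrow> v \<in> W \<Longrightarrow> u \<in> W \<Longrightarrow> le w v \<Longrightarrow> R v u \<Longrightarrow> R w u"
    using m unfolding brIML1_model_def by blast
  have up: "\<And>q w v. w \<in> W \<Longrightarrow> v \<in> W \<Longrightarrow> w \<in> V q \<Longrightarrow> le w v \<Longrightarrow> v \<in> V q"
    using m unfolding brIML1_model_def by blast
  {
  case (Var q)
  then show ?case using up leW by simp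
next
  case (Imp a b)
  show ?case
  unfolding forces.simps proof (intro ballI impI)
    fix u assume u: "u \<in> W" "le v u"
    have "le w u" using tr leW u Imp.prems(1) by blast
    then show "\<not> forces W le R V u a \<or> forces W le R V u b" using Imp.prems(2) u by simp
  qed
next
  case (Delta a)
  show ?case
  unfolding forces.simps proof (intro ballI impI)
    fix u assume u: "u \<in> W" "R v u"
    have "u \<in> W" using u by simp
    have "R w u" using trR leW u Delta.prems(1) by blast
    then show "forces W le R V u a" using Delta.prems(2) u by simp
  qed
next
  case Bot then show ?case by simp
next
  case (And a b) then show ?case by simp
next
  case (Or a b) then show ?case by auto
  }
qed

lemma class_eq:
  assumes "w \<in> W" "w' \<in> W" "filt_class W le R V S w = filt_class W le R V S w'" "\<alpha> \<in> S"
  shows "forces W le R V w \<alpha> \<longleftrightarrow> forces W le R V w' \<alpha>"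
proof -
  have "w' \<in> filt_class W le R V S w'" using assms unfolding filt_class_def by auto
  then have "w' \<in> filt_class W le R V S w" using assms by simp
  then show ?thesis using assms unfolding filt_class_def by auto
qed

theorem theorem5p4:
  fixes W :: "'w set" and le R :: "'w \<Rightarrow> 'w \<Rightarrow> bool" and V :: "nat \<Rightarrow> 'w set"
    and \<gamma> :: fm
  assumes "brIML1_model W le R V"
    and "\<exists>w\<in>W. \<not> forces W le R V w \<gamma>"
  shows "\<forall>w\<in>W. \<forall>\<alpha>\<in>subformulas \<gamma>.
           forces W le R V w \<alpha> \<longleftrightarrow>
           forces (filt_W W le R V (subformulas \<gamma>)) (filt_le W le R V (subformulas \<gamma>))
                  (filt_R W le R V (subformulas \<gamma>)) (filt_V W le R V (subformulas \<gamma>))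
                  (filt_class W le R V (subformulas \<gamma>) w) \<alpha>"
proof -
  define S where "S = subformulas \<gamma>"
  define C where "C = filt_class W le R V S"
  define F where "F = forces (filt_W W le R V S) (filt_le W le R V S) (filt_R W le R V S) (filt_V W le R V S)"
  note m = assms(1)
  have WW: "filt_W W le R V S = C ` W" unfolding filt_W_def C_def by simp
  have ce: "\<And>w w' a. w \<in> W \<Longrightarrow> w' \<in> W \<Longrightarrow> C w = C w' \<Longrightarrow> a \<in> S \<Longrightarrow>
      forces W le R V w a = forces W le R V w' a"
    unfolding C_def using class_eq by metis
  have closed: "\<And>a b. a \<in> S \<Longrightarrow> b \<in> subformulas a \<Longrightarrow> b \<in> S"
    unfolding S_def using sub_trans by blast
  have main: "\<And>w. w \<in> W \<Longrightarrow> \<alpha> \<in> S \<Longrightarrow> forces W le R V w \<alpha> \<longleftrightarrow> F (C w) \<alpha>" for \<alpha>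
  proof (induction \<alpha>)
    case (Var q)
    have "F (C w) (Var q) \<longleftrightarrow> C w \<in> C ` V q"
      using Var.prems unfolding F_def C_def filt_V_def by simp
    also have "\<dots> \<longleftrightarrow> w \<in> V q"
    proof
      assume "C w \<in> C ` V q"
      then obtain u where u: "u \<in> V q" "C w = C u" by auto
      have "u \<in> W" using u m unfolding brIML1_model_def by blast
      then show "w \<in> V q" using ce[OF Var.prems(1) \<open>u \<in> W\<close> u(2) Var.prems(2)] u by simp
    qed auto
    finally show ?case by simp
  next
    case (And a b)
    have "a \<in> S" "b \<in> S" using closed[OF And.prems(2)] sub_refl by auto
    then show ?case unfolding F_def using And.IH And.prems(1) by (simp only: forces.simps F_def)
  next
    case (Or a b)
    have "a \<in> S" "b \<in> S" using closed[OF Or.prems(2)] sub_refl by auto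
    then show ?case unfolding F_def using Or.IH Or.prems(1) by (simp only: forces.simps F_def)
  next
    case Bot
    then show ?case unfolding F_def by simp
  next
    case (Imp a b)
    have aS: "a \<in> S" and bS: "b \<in> S" using closed[OF Imp.prems(2)] sub_refl by auto
    have leC: "filt_le W le R V S X Y \<longleftrightarrow> X \<in> C ` W \<and> Y \<in> C ` W \<and> (\<exists>w v. X = C w \<and> Y = C v \<and> w \<in> W \<and> v \<in> W \<and>
        (\<forall>\<alpha>\<in>S. forces W le R V w \<alpha> \<longrightarrow> forces W le R V v \<alpha>))" for X Y
      unfolding filt_le_def WW C_def by simp
    have FI: "F (C w) (Imp a b) \<longleftrightarrow> (\<forall>Y\<in>C ` W. filt_le W le R V S (C w) Y \<longrightarrow> \<not> F Y a \<or> F Y b)"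
      unfolding F_def by (simp add: WW)
    show ?case
    proof
      assume H: "forces W le R V w (Imp a b)"
      show "F (C w) (Imp a b)" unfolding FI
      proof (intro ballI impI)
        fix Y assume "Y \<in> C ` W" "filt_le W le R V S (C w) Y"
        then obtain w' v where wv: "C w = C w'" "Y = C v" "w' \<in> W" "v \<in> W"
          "\<forall>\<alpha>\<in>S. forces W le R V w' \<alpha> \<longrightarrow> forces W le R V v \<alpha>" unfolding leC by blast
        have "forces W le R V w' (Imp a b)" using ce[OF Imp.prems(1) wv(3) wv(1) Imp.prems(2)] H by simp
        then have "forces W le R V v (Imp a b)" using wv(5) Imp.prems(2) by blast
        moreover have "le v v" using m wv(4) unfolding brIML1_model_def by blast
        ultimately have "\<not> forces W le R V v a \<or> forces W le R V v b" using wv(4) by simp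
        then show "\<not> F Y a \<or> F Y b" using Imp.IH aS bS wv by blast
      qed
    next
      assume H: "F (C w) (Imp a b)"
      show "forces W le R V w (Imp a b)"
      unfolding forces.simps proof (intro ballI impI)
        fix v assume v: "v \<in> W" "le w v"
        have "filt_le W le R V S (C w) (C v)" unfolding leC
          using v Imp.prems(1) persist[OF m] by blast
        then have "\<not> F (C v) a \<or> F (C v) b" using H v(1) unfolding FI by blast
        then show "\<not> forces W le R V v a \<or> forces W le R V v b" using Imp.IH aS bS v by blast
      qed
    qed
  next
    case (Delta a)
    have aS: "a \<in> S" using closed[OF Delta.prems(2)] sub_refl by auto
    have RC: "filt_R W le R V S X Y \<longleftrightarrow> X \<in> C ` W \<and> Y \<in> C ` W \<and> (\<exists>w v. X = C w \<and> Y = C v \<and> w \<in> W \<and> v \<in> W \<and>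
        (\<forall>\<beta>. Delta \<beta> \<in> S \<longrightarrow> forces W le R V w (Delta \<beta>) \<longrightarrow> forces W le R V v \<beta>))" for X Y
      unfolding filt_R_def WW C_def by simp
    have FD: "F (C w) (Delta a) \<longleftrightarrow> (\<forall>Y\<in>C ` W. filt_R W le R V S (C w) Y \<longrightarrow> F Y a)"
      unfolding F_def by (simp add: WW)
    show ?case
    proof
      assume H: "forces W le R V w (Delta a)"
      show "F (C w) (Delta a)" unfolding FD
      proof (intro ballI impI)
        fix Y assume "Y \<in> C ` W" "filt_R W le R V S (C w) Y"
        then obtain w' v where wv: "C w = C w'" "Y = C v" "w' \<in> W" "v \<in> W"
          "\<forall>\<beta>. Delta \<beta> \<in> S \<longrightarrow> forces W le R V w' (Delta \<beta>) \<longrightarrow> forces W le R V v \<beta>" unfolding RC by blast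
        have "forces W le R V w' (Delta a)" using ce[OF Delta.prems(1) wv(3) wv(1) Delta.prems(2)] H by simp
        then have "forces W le R V v a" using wv(5) Delta.prems(2) by blast
        then show "F Y a" using Delta.IH aS wv by blast
      qed
    next
      assume H: "F (C w) (Delta a)"
      show "forces W le R V w (Delta a)"
      unfolding forces.simps proof (intro ballI impI)
        fix v assume v: "v \<in> W" "R w v"
        have "filt_R W le R V S (C w) (C v)" unfolding RC
          using v Delta.prems(1) by auto
        then have "F (C v) a" using H v(1) unfolding FD by blast
        then show "forces W le R V v a" using Delta.IH aS v by blast
      qed
    qed
  qed
  show ?thesis using main unfolding S_def C_def F_def by blast
qed

end
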